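(* Let $A$ be an approximately unital Banach algebra. If $A$ has a left bounded approximate identity (respectively, right bounded approximate identity, two-sided bounded approximate identity) contained in ${\mathfrak r}_A$, then $A$ has a left bounded approximate identity (respectively, right, two-sided) contained in ${\mathfrak F}_A$.
   Context: Banach algebras are complex with submultiplicative norm; "unital" means identity of norm 1; approximately unital means having a contractive approximate identity. A left (resp. right, two-sided) bounded approximate identity is a bounded net $(e_t)$ with $e_ta\to a$ (resp. $ae_t\to a$, both) for all $a\in A$. Multiplier unitization $A^1$: $A$ if unital, otherwise $A+\mathbb{C}1$ with $\|a+\lambda1\|=\sup\{\|ac+\lambda c\|:c\in A,\|c\|\le1\}$. ${\mathfrak F}_A=\{a\in A:\|1-a\|_{A^1}\le1\}$; ${\mathfrak r}_A=\{a\in A:\mathrm{Re}\,\varphi(a)\ge0$ for all $\varphi\in(A^1)^*$ with $\|\varphi\|=\varphi(1)=1\}$. *)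

theory Defs
  imports "HOL-Analysis.Analysis"
begin

text \<open>A complex Banach algebra: a type of class real_normed_algebra (associative,
  submultiplicative norm, not necessarily unital) and banach (complete), together
  with a complex scalar multiplication sc extending scaleR and compatible with
  the norm and the product.\<close>

definition complex_scalars :: "(complex \<Rightarrow> 'a::real_normed_algebra \<Rightarrow> 'a) \<Rightarrow> bool" where
  "complex_scalars sc \<longleftrightarrow>
     (\<forall>c d x. sc c (sc d x) = sc (c * d) x) \<and>
     (\<forall>c x y. sc c (x + y) = sc c x + sc c y) \<and>
     (\<forall>c d x. sc (c + d) x = sc c x + sc d x) \<and>
     (\<forall>r x. sc (complex_of_real r) x = scaleR r x) \<and>
     (\<forall>c x. norm (sc c x) = cmod c * norm x) \<and>
     (\<forall>c x y. sc c (x * y) = sc c x * y \<and> sc c (x * y) = x * sc c y)"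

text \<open>Norm of a + l1 in the multiplier unitization A^1:
  sup { norm (a c + l c) : c in A, norm c <= 1 }.\<close>

definition mu_norm :: "(complex \<Rightarrow> 'a::real_normed_algebra \<Rightarrow> 'a) \<Rightarrow> 'a \<Rightarrow> complex \<Rightarrow> real" where
  "mu_norm sc a l = Sup {norm (a * c + sc l c) | c. norm c \<le> 1}"

text \<open>F_A = { a : norm (1 - a) in A^1 <= 1 }; note 1 - a = (-a) + 1*1.\<close>

definition FA :: "(complex \<Rightarrow> 'a::real_normed_algebra \<Rightarrow> 'a) \<Rightarrow> 'a set" where
  "FA sc = {a. mu_norm sc (- a) 1 \<le> 1}"

text \<open>States of A^1: functionals phi(a + l1) = psi a + l (so phi 1 = 1), psi complex
  linear on A, with norm phi <= 1 on A^1.\<close>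

definition unit_state :: "(complex \<Rightarrow> 'a::real_normed_algebra \<Rightarrow> 'a) \<Rightarrow> ('a \<Rightarrow> complex) \<Rightarrow> bool" where
  "unit_state sc \<psi> \<longleftrightarrow>
     (\<forall>x y. \<psi> (x + y) = \<psi> x + \<psi> y) \<and>
     (\<forall>c x. \<psi> (sc c x) = c * \<psi> x) \<and>
     (\<forall>a l. cmod (\<psi> a + l) \<le> mu_norm sc a l)"

definition rA :: "(complex \<Rightarrow> 'a::real_normed_algebra \<Rightarrow> 'a) \<Rightarrow> 'a set" where
  "rA sc = {a. \<forall>\<psi>. unit_state sc \<psi> \<longrightarrow> Re (\<psi> a) \<ge> 0}"

text \<open>Nets are represented by a proper filter F on an index type and a map e.\<close>

definition left_bai :: "'i filter \<Rightarrow> ('i \<Rightarrow> 'a::real_normed_algebra) \<Rightarrow> bool" where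
  "left_bai F e \<longleftrightarrow> F \<noteq> bot \<and> (\<exists>M. \<forall>i. norm (e i) \<le> M) \<and>
     (\<forall>a. ((\<lambda>i. e i * a) \<longlongrightarrow> a) F)"

definition right_bai :: "'i filter \<Rightarrow> ('i \<Rightarrow> 'a::real_normed_algebra) \<Rightarrow> bool" where
  "right_bai F e \<longleftrightarrow> F \<noteq> bot \<and> (\<exists>M. \<forall>i. norm (e i) \<le> M) \<and>
     (\<forall>a. ((\<lambda>i. a * e i) \<longlongrightarrow> a) F)"

definition two_sided_bai :: "'i filter \<Rightarrow> ('i \<Rightarrow> 'a::real_normed_algebra) \<Rightarrow> bool" where
  "two_sided_bai F e \<longleftrightarrow> left_bai F e \<and> right_bai F e"

definition contractive_ai :: "'i filter \<Rightarrow> ('i \<Rightarrow> 'a::real_normed_algebra) \<Rightarrow> bool" where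
  "contractive_ai F e \<longleftrightarrow> two_sided_bai F e \<and> (\<forall>i. norm (e i) \<le> 1)"

end

theory Submission
  imports Defs
begin


definition sublin :: "('a::real_normed_vector \<Rightarrow> real) \<Rightarrow> bool" where
  "sublin q \<longleftrightarrow> (\<forall>a b. q (a+b) \<le> q a + q b) \<and> (\<forall>c a. c > 0 \<longrightarrow> q (c *\<^sub>R a) \<le> c * q a)"

lemma sublin_add: "sublin q \<Longrightarrow> q (a+b) \<le> q a + q b"
  by (simp add: sublin_def)

lemma sublin_homle: "sublin q \<Longrightarrow> c > 0 \<Longrightarrow> q (c *\<^sub>R a) \<le> c * q a"
  unfolding sublin_def by blast

lemma sublin_hom: assumes "sublin q" "c > 0" shows "q (c *\<^sub>R a) = c * q a"
proof -
  have 1: "q (c *\<^sub>R a) \<le> c * q a" using assms by (simp add: sublin_def)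
  have "q a = q ((1/c) *\<^sub>R (c *\<^sub>R a))" using assms by simp
  also have "\<dots> \<le> (1/c) * q (c *\<^sub>R a)"
    by (rule sublin_homle) (use assms in auto)
  finally have "c * q a \<le> q (c *\<^sub>R a)" using assms by (simp add: field_simps)
  with 1 show ?thesis by linarith
qed

lemma sublin_0: assumes "sublin q" shows "q 0 = 0"
  using sublin_hom[OF assms, of 2 0] by simp

lemma sublin_hom0: assumes "sublin q" "c \<ge> 0" shows "q (c *\<^sub>R a) = c * q a"
  using assms sublin_hom[OF assms(1)] sublin_0[OF assms(1)]
  by (cases "c = 0") auto

lemma sublin_neg: assumes "sublin q" shows "0 \<le> q a + q (-a)"
  using sublin_add[OF assms, of a "-a"] sublin_0[OF assms] by simp

lemma inf_add_le:
  fixes U V :: "real set"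
  assumes "U \<noteq> {}" "V \<noteq> {}" "\<forall>u\<in>U. \<forall>v\<in>V. r \<le> u + v"
  shows "r \<le> Inf U + Inf V"
proof -
  have "\<forall>u\<in>U. r - u \<le> Inf V"
    using assms by (intro ballI cInf_greatest) force+
  hence "\<forall>u\<in>U. r - Inf V \<le> u" by force
  hence "r - Inf V \<le> Inf U" using assms(1) by (intro cInf_greatest) auto
  thus ?thesis by simp
qed

definition rr :: "('a::real_normed_vector \<Rightarrow> real) \<Rightarrow> 'a \<Rightarrow> 'a \<Rightarrow> real" where
  "rr q z x = Inf {q (x + t *\<^sub>R z) - t * q z | t. t \<ge> 0}"

lemma rr_lower:
  assumes "sublin q" "t \<ge> 0"
  shows "- q (-x) \<le> q (x + t *\<^sub>R z) - t * q z"
proof -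
  have "q (t *\<^sub>R z) \<le> q (x + t *\<^sub>R z) + q (-x)"
    using sublin_add[OF assms(1), of "x + t *\<^sub>R z" "-x"] by simp
  thus ?thesis using sublin_hom0[OF assms] by simp
qed

lemma rr_bdd: "sublin q \<Longrightarrow> bdd_below {q (x + t *\<^sub>R z) - t * q z | t. t \<ge> 0}"
  unfolding bdd_below_def using rr_lower by blast

lemma rr_le: assumes "sublin q" "t \<ge> 0" shows "rr q z x \<le> q (x + t *\<^sub>R z) - t * q z"
  unfolding rr_def by (rule cInf_lower) (use assms rr_bdd[OF assms(1)] in auto)

lemma rr_props:
  assumes q: "sublin q"
  shows "sublin (rr q z)" "rr q z x \<le> q x" "rr q z (-z) \<le> - q z"
proof -
  show "rr q z x \<le> q x" using rr_le[OF q, of 0] by simp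
  show "rr q z (-z) \<le> - q z" using rr_le[OF q, of 1 z "-z"] sublin_0[OF q] by simp
  have ne: "{q (x + t *\<^sub>R z) - t * q z | t. t \<ge> 0} \<noteq> {}" for x by auto
  have add: "rr q z (a+b) \<le> rr q z a + rr q z b" for a b
    unfolding rr_def[of q z a] rr_def[of q z b]
  proof (rule inf_add_le[OF ne ne], intro ballI)
    fix u v assume "u \<in> {q (a + t *\<^sub>R z) - t * q z | t. t \<ge> 0}"
      "v \<in> {q (b + t *\<^sub>R z) - t * q z | t. t \<ge> 0}"
    then obtain t s where ts: "t \<ge> 0" "s \<ge> 0" "u = q (a + t *\<^sub>R z) - t * q z"
      "v = q (b + s *\<^sub>R z) - s * q z" by blast
    have "rr q z (a+b) \<le> q ((a + b) + (t+s) *\<^sub>R z) - (t+s) * q z"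
      using ts by (intro rr_le[OF q]) auto
    also have "(a + b) + (t+s) *\<^sub>R z = (a + t *\<^sub>R z) + (b + s *\<^sub>R z)"
      by (simp add: algebra_simps)
    also have "q \<dots> \<le> q (a + t *\<^sub>R z) + q (b + s *\<^sub>R z)" by (rule sublin_add[OF q])
    finally show "rr q z (a+b) \<le> u + v" using ts by (simp add: algebra_simps)
  qed
  have hom: "rr q z (c *\<^sub>R a) \<le> c * rr q z a" if c: "c > 0" for c a
  proof -
    have "rr q z (c *\<^sub>R a) / c \<le> rr q z a"
      unfolding rr_def[of q z a]
    proof (rule cInf_greatest[OF ne], clarify)
      fix t :: real assume t: "t \<ge> 0"
      have "rr q z (c *\<^sub>R a) \<le> q (c *\<^sub>R a + (c*t) *\<^sub>R z) - (c*t) * q z"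
        using t c by (intro rr_le[OF q]) auto
      also have "c *\<^sub>R a + (c*t) *\<^sub>R z = c *\<^sub>R (a + t *\<^sub>R z)" by (simp add: algebra_simps)
      also have "q \<dots> = c * q (a + t *\<^sub>R z)" using sublin_hom[OF q c] by simp
      finally show "rr q z (c *\<^sub>R a) / c \<le> q (a + t *\<^sub>R z) - t * q z"
        using c by (simp add: field_simps)
    qed
    thus ?thesis using c by (simp add: field_simps)
  qed
  show "sublin (rr q z)" unfolding sublin_def using add hom by blast
qed

lemma chain_inf:
  fixes Q :: "('a::real_normed_vector \<Rightarrow> real) set"
  assumes ne: "Q \<noteq> {}" and sub: "\<forall>q\<in>Q. sublin q"
    and lb: "\<forall>q\<in>Q. \<forall>x. N x \<le> q x"
    and ch: "\<forall>q1\<in>Q. \<forall>q2\<in>Q. (\<forall>x. q1 x \<le> q2 x) \<or> (\<forall>x. q2 x \<le> q1 x)"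
  shows "sublin (\<lambda>x. Inf ((\<lambda>q. q x) ` Q))" "\<forall>q\<in>Q. \<forall>x. Inf ((\<lambda>q. q x) ` Q) \<le> q x"
proof -
  have bdd: "bdd_below ((\<lambda>q. q x) ` Q)" for x using lb by (auto simp: bdd_below_def)
  show low: "\<forall>q\<in>Q. \<forall>x. Inf ((\<lambda>q. q x) ` Q) \<le> q x"
    using bdd by (auto intro: cInf_lower)
  have add: "Inf ((\<lambda>q. q (a+b)) ` Q) \<le> Inf ((\<lambda>q. q a) ` Q) + Inf ((\<lambda>q. q b) ` Q)" for a b
  proof (rule inf_add_le)
    show "(\<lambda>q. q a) ` Q \<noteq> {}" "(\<lambda>q. q b) ` Q \<noteq> {}" using ne by auto
    show "\<forall>u\<in>(\<lambda>q. q a) ` Q. \<forall>v\<in>(\<lambda>q. q b) ` Q. Inf ((\<lambda>q. q (a+b)) ` Q) \<le> u + v"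
    proof (clarify)
    fix q1 q2 assume q: "q1 \<in> Q" "q2 \<in> Q"
    show "Inf ((\<lambda>q. q (a+b)) ` Q) \<le> q1 a + q2 b"
    proof (cases "\<forall>x. q1 x \<le> q2 x")
      case True
      have "Inf ((\<lambda>q. q (a+b)) ` Q) \<le> q1 (a+b)" using low q by blast
      also have "\<dots> \<le> q1 a + q1 b" using sub q by (simp add: sublin_add)
      finally show ?thesis using True by (smt (verit))
    next
      case False
      hence "\<forall>x. q2 x \<le> q1 x" using ch q by blast
      have "Inf ((\<lambda>q. q (a+b)) ` Q) \<le> q2 (a+b)" using low q by blast
      also have "\<dots> \<le> q2 a + q2 b" using sub q by (simp add: sublin_add)
      finally show ?thesis using \<open>\<forall>x. q2 x \<le> q1 x\<close> by (smt (verit))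
    qed
  qed
  qed
  have hom: "Inf ((\<lambda>q. q (c *\<^sub>R a)) ` Q) \<le> c * Inf ((\<lambda>q. q a) ` Q)" if c: "c > 0" for c a
  proof -
    have "Inf ((\<lambda>q. q (c *\<^sub>R a)) ` Q) / c \<le> Inf ((\<lambda>q. q a) ` Q)"
    proof (rule cInf_greatest)
      show "(\<lambda>q. q a) ` Q \<noteq> {}" using ne by auto
      fix v assume "v \<in> (\<lambda>q. q a) ` Q"
      then obtain q where q: "q \<in> Q" and v: "v = q a" by blast
      have "Inf ((\<lambda>q. q (c *\<^sub>R a)) ` Q) \<le> q (c *\<^sub>R a)" using low q by blast
      also have "\<dots> = c * q a" using sublin_hom sub q c by blast
      finally show "Inf ((\<lambda>q. q (c *\<^sub>R a)) ` Q) / c \<le> v" using c v by (simp add: field_simps)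
    qed
    thus ?thesis using c by (simp add: field_simps)
  qed
  show "sublin (\<lambda>x. Inf ((\<lambda>q. q x) ` Q))" unfolding sublin_def using add hom by blast
qed

lemma minimal_linear:
  assumes q: "sublin q" and m: "\<And>z. rr q z = q"
  shows "q (-z) = - q z" "q (a + b) = q a + q b" "q (c *\<^sub>R a) = c * q a"
proof -
  have neg: "q (-z) = - q z" for z
    using rr_props(3)[OF q, of z] m[of z] sublin_neg[OF q, of z] by simp
  show "q (-z) = - q z" by (rule neg)
  show "q (a + b) = q a + q b"
    using sublin_add[OF q, of a b] sublin_add[OF q, of "-a" "-b"] neg[of a] neg[of b] neg[of "a+b"]
    by (simp add: algebra_simps)
  show "q (c *\<^sub>R a) = c * q a"
  proof (cases "c \<ge> 0")
    case True thus ?thesis using sublin_hom0[OF q] by blast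
  next
    case False
    have "q (c *\<^sub>R a) = q (- ((-c) *\<^sub>R a))" by simp
    also have "\<dots> = - q ((-c) *\<^sub>R a)" by (rule neg)
    also have "\<dots> = c * q a" using sublin_hom0[OF q, of "-c" a] False by simp
    finally show ?thesis .
  qed
qed

lemma sublin_norm: "sublin (norm :: 'a::real_normed_vector \<Rightarrow> real)"
  unfolding sublin_def by (simp add: norm_triangle_ineq)

lemma epi_mono:
  assumes "\<forall>x. m x \<le> (q x :: real)"
  shows "{(x, v). q x \<le> v} \<subseteq> {(x, v). m x \<le> v}"
proof
  fix p assume "p \<in> {(x, v). q x \<le> v}"
  then obtain x v where p: "p = (x, v)" "q x \<le> v" by blast
  have "m x \<le> v" using assms p(2) by (meson order_trans)
  thus "p \<in> {(x, v). m x \<le> v}" unfolding p(1) by simp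
qed

lemma real_HB:
  fixes y :: "'a::real_normed_vector"
  shows "\<exists>f. (\<forall>a b. f (a+b) = f a + f b) \<and> (\<forall>c a. f (c *\<^sub>R a) = c * f a) \<and>
             (\<forall>x. f x \<le> norm x) \<and> f y = norm y"
proof -
  define r0 where "r0 = rr norm y"
  have r0s: "sublin r0" and r0le: "\<And>x. r0 x \<le> norm x" and r0y: "r0 (-y) \<le> - norm y"
    unfolding r0_def using rr_props[OF sublin_norm] by auto
  define P where "P = {q. sublin q \<and> (\<forall>x. q x \<le> r0 x)}"
  define E where "E q = {(x, v). q x \<le> v}" for q :: "'a \<Rightarrow> real"
  have Einj: "E q1 \<subseteq> E q2 \<Longrightarrow> q2 x \<le> q1 x" for q1 q2 x
    unfolding E_def by auto
  have r0P: "r0 \<in> P" unfolding P_def using r0s by auto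
  have "\<exists>M\<in>E ` P. \<forall>X\<in>E ` P. M \<subseteq> X \<longrightarrow> X = M"
  proof (rule Zorn_Lemma2, intro ballI)
    fix C assume C: "C \<in> chains (E ` P)"
    show "\<exists>U\<in>E ` P. \<forall>X\<in>C. X \<subseteq> U"
    proof (cases "C = {}")
      case True thus ?thesis using r0P by blast
    next
      case False
      define Q where "Q = {q \<in> P. E q \<in> C}"
      have CE: "C \<subseteq> E ` P" using C by (auto simp: chains_def)
      hence Qne: "Q \<noteq> {}" using False unfolding Q_def by auto
      have subQ: "\<forall>q\<in>Q. sublin q" unfolding Q_def P_def by auto
      have lbQ: "\<forall>q\<in>Q. \<forall>x. - norm x \<le> q x"
      proof (intro ballI allI)
        fix q x assume "q \<in> Q"
        hence "sublin q" "q (-x) \<le> r0 (-x)" unfolding Q_def P_def by auto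
        thus "- norm x \<le> q x" using sublin_neg[of q x] r0le[of "-x"] by simp
      qed
      have chQ: "\<forall>q1\<in>Q. \<forall>q2\<in>Q. (\<forall>x. q1 x \<le> q2 x) \<or> (\<forall>x. q2 x \<le> q1 x)"
      proof (intro ballI)
        fix q1 q2 assume "q1 \<in> Q" "q2 \<in> Q"
        hence "E q1 \<subseteq> E q2 \<or> E q2 \<subseteq> E q1" using C unfolding Q_def chains_def chain_subset_def by blast
        thus "(\<forall>x. q1 x \<le> q2 x) \<or> (\<forall>x. q2 x \<le> q1 x)" using Einj by blast
      qed
      define m where "m x = Inf ((\<lambda>q. q x) ` Q)" for x
      have ms: "sublin m" and mle: "\<forall>q\<in>Q. \<forall>x. m x \<le> q x"
        using chain_inf[OF Qne subQ lbQ chQ] unfolding m_def by auto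
      obtain q0 where q0: "q0 \<in> Q" using Qne by blast
      have "m x \<le> r0 x" for x
      proof -
        have "m x \<le> q0 x" using mle q0 by blast
        also have "q0 x \<le> r0 x" using q0 unfolding Q_def P_def by blast
        finally show ?thesis .
      qed
      hence mP: "m \<in> P" using ms unfolding P_def by auto
      have "\<forall>X\<in>C. X \<subseteq> E m"
      proof
        fix X assume "X \<in> C"
        then obtain q where "q \<in> P" "X = E q" using CE by blast
        hence "q \<in> Q" using \<open>X \<in> C\<close> unfolding Q_def by auto
        hence "\<forall>x. m x \<le> q x" using mle by blast
        show "X \<subseteq> E m" unfolding \<open>X = E q\<close>
        proof
          fix p assume "p \<in> E q"
          then obtain x v where p: "p = (x, v)" "q x \<le> v" unfolding E_def by blast
          have "m x \<le> v" using \<open>\<forall>x. m x \<le> q x\<close> p(2) by (meson order_trans)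
          thus "p \<in> E m" unfolding E_def p(1) by simp
        qed
      qed
      thus ?thesis using mP by blast
    qed
  qed
  then obtain q where qP: "q \<in> P" and qmax: "\<forall>X\<in>E ` P. E q \<subseteq> X \<longrightarrow> X = E q" by blast
  have qs: "sublin q" and qle: "\<And>x. q x \<le> r0 x" using qP unfolding P_def by auto
  have "rr q z = q" for z
  proof -
    have "\<forall>x. rr q z x \<le> r0 x"
    proof
      fix x show "rr q z x \<le> r0 x" using rr_props(2)[OF qs, of z x] qle[of x] by linarith
    qed
    hence "rr q z \<in> P" using rr_props(1)[OF qs, of z] unfolding P_def by blast
    moreover have "E q \<subseteq> E (rr q z)" unfolding E_def by (rule epi_mono) (use rr_props(2)[OF qs, of z] in blast)
    ultimately have "E (rr q z) = E q" using qmax by blast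
    thus ?thesis using Einj by (intro ext antisym) auto
  qed
  note lin = minimal_linear[OF qs this]
  have "q y \<ge> norm y" using lin(1)[of y] qle[of "-y"] r0y by simp
  moreover have "q y \<le> norm y" using qle[of y] r0le[of y] by simp
  ultimately have "q y = norm y" by linarith
  moreover have "\<forall>x. q x \<le> norm x"
  proof
    fix x show "q x \<le> norm x" using qle[of x] r0le[of x] by linarith
  qed
  moreover have "\<forall>a b. q (a+b) = q a + q b" "\<forall>c a. q (c *\<^sub>R a) = c * q a" using lin by blast+
  ultimately show ?thesis by blast
qed

lemma cs_ofreal: "complex_scalars sc \<Longrightarrow> sc (complex_of_real r) x = r *\<^sub>R x"
  unfolding complex_scalars_def by blast
lemma cs_mult: "complex_scalars sc \<Longrightarrow> sc c (sc d x) = sc (c * d) x"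
  unfolding complex_scalars_def by blast
lemma cs_addc: "complex_scalars sc \<Longrightarrow> sc (c + d) x = sc c x + sc d x"
  unfolding complex_scalars_def by blast
lemma cs_addx: "complex_scalars sc \<Longrightarrow> sc c (x + y) = sc c x + sc c y"
  unfolding complex_scalars_def by blast
lemma cs_norm: "complex_scalars sc \<Longrightarrow> norm (sc c x) = cmod c * norm x"
  unfolding complex_scalars_def by blast
lemma cs_left: "complex_scalars sc \<Longrightarrow> sc c (x * y) = sc c x * y"
  unfolding complex_scalars_def by blast
lemma cs_right: "complex_scalars sc \<Longrightarrow> sc c (x * y) = x * sc c y"
  unfolding complex_scalars_def by blast

lemma cs_scaleR: assumes "complex_scalars sc" shows "sc c (r *\<^sub>R x) = r *\<^sub>R sc c x"
proof -
  have "sc c (r *\<^sub>R x) = sc c (sc (complex_of_real r) x)" using cs_ofreal[OF assms] by simp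
  also have "\<dots> = sc (complex_of_real r) (sc c x)" using cs_mult[OF assms] by (simp add: mult.commute)
  finally show ?thesis using cs_ofreal[OF assms] by simp
qed

lemma cs_decomp:
  assumes cs: "complex_scalars sc" and fa: "\<forall>a b. f (a+b) = f a + f b"
    and fr: "\<forall>c a. f (c *\<^sub>R a) = c * f a"
  shows "f (sc c x) = Re c * f x + Im c * f (sc \<i> x)"
proof -
  have "c = complex_of_real (Re c) + \<i> * complex_of_real (Im c)" by (simp add: complex_eq_iff)
  hence "sc c x = sc (complex_of_real (Re c) + \<i> * complex_of_real (Im c)) x" by simp
  also have "\<dots> = sc (complex_of_real (Re c)) x + sc (\<i> * complex_of_real (Im c)) x" by (rule cs_addc[OF cs])
  finally have 1: "sc c x = sc (complex_of_real (Re c)) x + sc (\<i> * complex_of_real (Im c)) x" .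
  have 2: "sc (\<i> * complex_of_real (Im c)) x = sc \<i> (sc (complex_of_real (Im c)) x)" by (rule cs_mult[OF cs, symmetric])
  have 3: "sc (complex_of_real (Im c)) x = Im c *\<^sub>R x" "sc (complex_of_real (Re c)) x = Re c *\<^sub>R x"
    by (rule cs_ofreal[OF cs])+
  have 4: "sc \<i> (Im c *\<^sub>R x) = Im c *\<^sub>R sc \<i> x" by (rule cs_scaleR[OF cs])
  have "sc c x = Re c *\<^sub>R x + Im c *\<^sub>R sc \<i> x" unfolding 1 2 3 4 ..
  thus ?thesis using fa fr by simp
qed

lemma complex_HB:
  assumes cs: "complex_scalars sc"
  shows "\<exists>F. (\<forall>a b. F (a+b) = F a + F b) \<and> (\<forall>c a. F (sc c a) = c * F a) \<and>
             (\<forall>x. cmod (F x) \<le> norm x) \<and> F y = complex_of_real (norm y)"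
proof -
  obtain f where fa: "\<forall>a b. f (a+b) = f a + f b" and fr: "\<forall>c a. f (c *\<^sub>R a) = c * f a"
    and fle: "\<forall>x. f x \<le> norm x" and fy: "f y = norm y"
    using real_HB[of y] by blast
  define F where "F x = Complex (f x) (- f (sc \<i> x))" for x
  have Fa: "F (a+b) = F a + F b" for a b unfolding F_def using fa cs_addx[OF cs] by (simp add: complex_eq_iff)
  have Fc: "F (sc c a) = c * F a" for c a
  proof -
    have 1: "f (sc c a) = Re c * f a + Im c * f (sc \<i> a)" by (rule cs_decomp[OF cs fa fr])
    have "f (sc \<i> (sc c a)) = f (sc (\<i> * c) a)" using cs_mult[OF cs] by simp
    also have "\<dots> = - Im c * f a + Re c * f (sc \<i> a)" using cs_decomp[OF cs fa fr, of "\<i> * c" a] by simp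
    finally show ?thesis unfolding F_def using 1 by (simp add: complex_eq_iff algebra_simps)
  qed
  have ReF: "Re (F x) = f x" for x unfolding F_def by simp
  have Fn: "cmod (F x) \<le> norm x" for x
  proof (cases "F x = 0")
    case True thus ?thesis by simp
  next
    case False
    define w where "w = cnj (F x) / complex_of_real (cmod (F x))"
    have "F (sc w x) = w * F x" by (rule Fc)
    also have "\<dots> = (cnj (F x) * F x) / complex_of_real (cmod (F x))" unfolding w_def by simp
    also have "cnj (F x) * F x = complex_of_real (cmod (F x)) * complex_of_real (cmod (F x))"
      using complex_norm_square[of "F x"] by (simp add: mult.commute power2_eq_square)
    also have "\<dots> / complex_of_real (cmod (F x)) = complex_of_real (cmod (F x))" using False by simp
    finally have "cmod (F x) = f (sc w x)" using ReF[of "sc w x"] by simp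
    also have "\<dots> \<le> norm (sc w x)" using fle by blast
    also have "\<dots> = norm x" using cs_norm[OF cs] False unfolding w_def by (simp add: norm_divide)
    finally show ?thesis .
  qed
  have "F y = complex_of_real (norm y)"
  proof -
    have r: "Re (F y) = norm y" using ReF fy by simp
    have "cmod (F y) \<le> Re (F y)" using Fn[of y] r by simp
    hence "cmod (F y) = Re (F y)" using complex_Re_le_cmod[of "F y"] by linarith
    hence "Im (F y) ^ 2 = 0" using cmod_power2[of "F y"] by simp
    thus ?thesis using r by (simp add: complex_eq_iff)
  qed
  thus ?thesis using Fa Fc Fn by blast
qed



lemma mu_bdd:
  assumes cs: "complex_scalars sc"
  shows "bdd_above {norm (a * c + sc l c) | c. norm c \<le> 1}"
proof -
  have "norm (a * c + sc l c) \<le> norm a + cmod l" if "norm c \<le> 1" for c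
  proof -
    have "norm (a * c + sc l c) \<le> norm a * norm c + cmod l * norm c"
      using norm_triangle_ineq[of "a*c" "sc l c"] norm_mult_ineq[of a c] cs_norm[OF cs, of l c] by linarith
    also have "\<dots> \<le> norm a + cmod l" using that
      by (intro add_mono mult_left_le) auto
    finally show ?thesis .
  qed
  thus ?thesis unfolding bdd_above_def by blast
qed

lemma mu_upper:
  assumes cs: "complex_scalars sc" and "norm c \<le> 1"
  shows "norm (a * c + sc l c) \<le> mu_norm sc a l"
  unfolding mu_norm_def by (rule cSup_upper) (use assms mu_bdd[OF cs] in auto)

lemma accretive_bound:
  assumes cs: "complex_scalars sc" and e: "e \<in> rA sc" and t: "t \<ge> 0"
  shows "norm y \<le> norm (y + t *\<^sub>R (e * y))"
proof (cases "y = 0")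
  case True thus ?thesis by simp
next
  case False
  define n where "n = norm y"
  have n: "n > 0" using False unfolding n_def by simp
  obtain F where Fa: "\<forall>a b. F (a+b) = F a + F b" and Fc: "\<forall>c a. F (sc c a) = c * F a"
    and Fn: "\<forall>x. cmod (F x) \<le> norm x" and Fy: "F y = complex_of_real n"
    using complex_HB[OF cs, of y] unfolding n_def by blast
  have Fr: "F (r *\<^sub>R x) = complex_of_real r * F x" for r x
    using Fc cs_ofreal[OF cs, of r x] by metis
  define \<psi> where "\<psi> b = F (b * y) / complex_of_real n" for b
  have st: "unit_state sc \<psi>"
    unfolding unit_state_def
  proof (intro conjI allI)
    fix a b show "\<psi> (a + b) = \<psi> a + \<psi> b" unfolding \<psi>_def using Fa by (simp add: distrib_right add_divide_distrib)
  next
    fix c a show "\<psi> (sc c a) = c * \<psi> a" unfolding \<psi>_def using Fc by (simp add: cs_left[OF cs, symmetric])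
  next
    fix a l
    define c where "c = (1/n) *\<^sub>R y"
    have nc: "norm c \<le> 1" unfolding c_def using n by (simp add: n_def)
    have "\<psi> a + l = F (a * y + sc l y) / complex_of_real n"
      unfolding \<psi>_def using Fa Fc Fy n by (simp add: field_simps)
    hence "cmod (\<psi> a + l) = cmod (F (a * y + sc l y)) / n" using n by (simp add: norm_divide)
    also have "\<dots> \<le> norm (a * y + sc l y) / n" using Fn n by (simp add: divide_right_mono)
    also have "\<dots> = norm (a * c + sc l c)"
      unfolding c_def using n cs_scaleR[OF cs] by (simp add: scaleR_add_right[symmetric])
    also have "\<dots> \<le> mu_norm sc a l" by (rule mu_upper[OF cs nc])
    finally show "cmod (\<psi> a + l) \<le> mu_norm sc a l" .
  qed
  hence "Re (\<psi> e) \<ge> 0" using e unfolding rA_def by blast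
  hence re: "Re (F (e * y)) \<ge> 0" unfolding \<psi>_def using n by (simp add: divide_nonneg_pos zero_le_divide_iff)
  have "Re (F (y + t *\<^sub>R (e * y))) = n + t * Re (F (e * y))" using Fa Fr Fy by simp
  also have "\<dots> \<ge> n" using re t by simp
  finally have "n \<le> Re (F (y + t *\<^sub>R (e * y)))" .
  also have "\<dots> \<le> cmod (F (y + t *\<^sub>R (e * y)))" by (rule complex_Re_le_cmod)
  also have "\<dots> \<le> norm (y + t *\<^sub>R (e * y))" using Fn by blast
  finally show ?thesis unfolding n_def .
qed



fun spow :: "'a::ring \<Rightarrow> nat \<Rightarrow> 'a" where
  "spow s 0 = 0"
| "spow s (Suc k) = s + spow s k - spow s k * s"

lemma left_id:
  fixes P Q x e a d :: "'a::real_normed_algebra"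
  assumes "x = \<epsilon> *\<^sub>R e" "\<epsilon> \<noteq> 0" "x - P * x = P - Q" "d = a - e * a"
  shows "a - P * a = (d - P * d) + (1/\<epsilon>) *\<^sub>R ((P - Q) * a)"
proof -
  have "(P - Q) * a = x * a - P * (x * a)" unfolding assms(3)[symmetric] by (simp add: left_diff_distrib mult.assoc)
  hence T: "(1/\<epsilon>) *\<^sub>R ((P - Q) * a) = e * a - P * (e * a)" using assms(1,2) by (simp add: scaleR_diff_right)
  show ?thesis unfolding T assms(4) by (simp add: algebra_simps)
qed

lemma right_id:
  fixes P Q x e a d :: "'a::real_normed_algebra"
  assumes "x = \<epsilon> *\<^sub>R e" "\<epsilon> \<noteq> 0" "x - x * P = P - Q" "d = a - a * e"
  shows "a - a * P = (d - d * P) + (1/\<epsilon>) *\<^sub>R (a * (P - Q))"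
proof -
  have "a * (P - Q) = a * x - (a * x) * P" unfolding assms(3)[symmetric] by (simp add: right_diff_distrib mult.assoc)
  hence T: "(1/\<epsilon>) *\<^sub>R (a * (P - Q)) = a * e - (a * e) * P" using assms(1,2) by (simp add: scaleR_diff_right)
  show ?thesis unfolding T assms(4) by (simp add: algebra_simps)
qed

lemma avg_split:
  fixes f h :: "nat \<Rightarrow> 'a::real_normed_vector"
  assumes "\<And>k. f k = h k + c *\<^sub>R D k"
  shows "(1/N) *\<^sub>R (\<Sum>k<m. f k) = (1/N) *\<^sub>R (\<Sum>k<m. h k) + (c / N) *\<^sub>R (\<Sum>k<m. D k)"
  unfolding assms by (simp add: sum.distrib scaleR_add_right scaleR_sum_right[symmetric])

lemma avg_bound:
  fixes f :: "nat \<Rightarrow> 'a::real_normed_vector"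
  assumes "\<And>k. norm (f k) \<le> B"
  shows "norm ((1 / real (Suc n)) *\<^sub>R (\<Sum>k<Suc n. f k)) \<le> B"
proof -
  have "norm (\<Sum>k<Suc n. f k) \<le> (\<Sum>k<Suc n. B)"
    by (rule order_trans[OF norm_sum sum_mono]) (rule assms)
  hence "norm (\<Sum>k<Suc n. f k) \<le> real (Suc n) * B" by (simp only: sum_constant) simp
  moreover define X where "X = (\<Sum>k<Suc n. f k)"
  ultimately have "norm X \<le> real (Suc n) * B" by simp
  hence "norm ((1 / real (Suc n)) *\<^sub>R X) \<le> B"
    by (simp only: norm_scaleR) (simp add: field_simps del: of_nat_Suc)
  thus ?thesis unfolding X_def .
qed

lemma construct:
  fixes sc :: "complex \<Rightarrow> 'a::{real_normed_algebra,banach} \<Rightarrow> 'a"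
    and F0 :: "'j filter" and e0 :: "'j \<Rightarrow> 'a"
  assumes cs: "complex_scalars sc" and cai: "contractive_ai F0 e0"
    and e: "e \<in> rA sc" and eM: "norm e \<le> M"
  shows "\<exists>g. g \<in> FA sc \<and> norm g \<le> 2 \<and>
     (\<forall>a. norm (a - g * a) \<le> norm (a - e * a) + 4 * (M+1) / real (Suc n) * norm a) \<and>
     (\<forall>a. norm (a - a * g) \<le> 3 * norm (a - a * e) + 4 * (M+1) / real (Suc n) * norm a)"
proof -
  have M0: "M \<ge> 0" using eM norm_ge_zero order_trans by blast
  define \<epsilon> where "\<epsilon> = 1 / (2 * (M + 1))"
  have \<epsilon>0: "\<epsilon> > 0" unfolding \<epsilon>_def using M0 by simp
  define x where "x = \<epsilon> *\<^sub>R e"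
  have nx: "norm x \<le> 1/2"
  proof -
    have "norm x = \<epsilon> * norm e" unfolding x_def using \<epsilon>0 by simp
    also have "\<dots> \<le> \<epsilon> * M" using \<epsilon>0 eM by simp
    also have "\<dots> \<le> 1/2" unfolding \<epsilon>_def using M0 by (simp add: field_simps)
    finally show ?thesis .
  qed
  have contr: "norm (x * (b - a)) \<le> 1/2 * norm (b - a)" for a b
    using norm_mult_ineq[of x "b - a"] nx mult_right_mono[OF nx, of "norm (b-a)"] by simp
  have lip: "\<forall>a b. dist (x - x * a) (x - x * b) \<le> 1/2 * dist a b"
  proof (intro allI)
    fix a b
    have "dist (x - x * a) (x - x * b) = norm (x * (b - a))" by (simp add: dist_norm right_diff_distrib)
    also have "\<dots> \<le> 1/2 * norm (b - a)" by (rule contr)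
    also have "\<dots> = 1/2 * dist a b" by (simp add: dist_norm norm_minus_commute)
    finally show "dist (x - x * a) (x - x * b) \<le> 1/2 * dist a b" .
  qed
  obtain s where s: "(\<lambda>s. x - x * s) s = s"
    using banach_fix_type[of "1/2" "\<lambda>s. x - x * s"] lip by auto
  have lip': "\<forall>a b. dist (x - a * x) (x - b * x) \<le> 1/2 * dist a b"
  proof (intro allI)
    fix a b
    have "dist (x - a * x) (x - b * x) = norm ((b - a) * x)" by (simp add: dist_norm left_diff_distrib)
    also have "\<dots> \<le> norm (b - a) * norm x" by (rule norm_mult_ineq)
    also have "\<dots> \<le> norm (b - a) * (1/2)" by (rule mult_left_mono[OF nx norm_ge_zero])
    also have "\<dots> = 1/2 * dist a b" by (simp add: dist_norm norm_minus_commute)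
    finally show "dist (x - a * x) (x - b * x) \<le> 1/2 * dist a b" .
  qed
  obtain s' where s': "(\<lambda>s. x - s * x) s' = s'"
    using banach_fix_type[of "1/2" "\<lambda>s. x - s * x"] lip' by auto
  have sdef: "s = x - x * s" using s by simp
  have s'def: "s' = x - s' * x" using s' by simp
  have h1: "s' * s = s' * x - s' * x * s"
    using arg_cong[OF sdef, of "\<lambda>t. s' * t"] by (simp add: right_diff_distrib mult.assoc)
  have h2: "s' * s = x * s - s' * x * s"
    using arg_cong[OF s'def, of "\<lambda>t. t * s"] by (simp add: left_diff_distrib mult.assoc)
  have "s' * x = x * s" using h1 h2 by (simp add: algebra_simps)
  hence "s' = s" using sdef s'def by simp
  hence comm: "s * x = x * s" using s'def sdef \<open>s' * x = x * s\<close> by simp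
  have xs: "x * s = x - s"
  proof -
    have "x * s = x - (x - x * s)" by simp
    thus ?thesis unfolding sdef[symmetric] .
  qed
  have sx: "s * x = x - s" using xs comm by simp
  have L1: "norm (c - s * c) \<le> norm c" for c
  proof -
    define y where "y = c - s * c"
    have "y + \<epsilon> *\<^sub>R (e * y) = y + x * y" unfolding x_def by simp
    also have "\<dots> = c"
    proof -
      have "x * (c - s * c) = x * c - (x * s) * c" by (simp add: right_diff_distrib mult.assoc)
      also have "\<dots> = s * c" unfolding xs by (simp add: left_diff_distrib)
      finally show ?thesis unfolding y_def by simp
    qed
    finally have "y + \<epsilon> *\<^sub>R (e * y) = c" .
    moreover have "norm y \<le> norm (y + \<epsilon> *\<^sub>R (e * y))"
      by (rule accretive_bound[OF cs e]) (use \<epsilon>0 in simp)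
    ultimately show ?thesis unfolding y_def by simp
  qed
  have L2: "norm (c - spow s k * c) \<le> norm c" for k c
  proof (induction k arbitrary: c)
    case 0 thus ?case by simp
  next
    case (Suc k)
    have eq: "c - spow s (Suc k) * c = (c - s * c) - spow s k * (c - s * c)"
      by (simp add: algebra_simps mult.assoc)
    have "norm (c - spow s (Suc k) * c) \<le> norm (c - s * c)" unfolding eq by (rule Suc.IH)
    thus ?case using L1 order_trans by blast
  qed
  have L3: "spow s k * x = x * spow s k" for k
  proof (induction k)
    case 0 show ?case by simp
  next
    case (Suc k)
    have a: "x * (spow s k * s) = spow s k * (x * s)" by (metis Suc.IH mult.assoc)
    have b: "spow s k * (s * x) = spow s k * (x * s)" by (simp add: comm)
    show ?case using a b Suc.IH by (simp add: algebra_simps comm mult.assoc)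
  qed
  have L4: "x - spow s (Suc k) * x = spow s (Suc k) - spow s k" for k
  proof -
    have "x - spow s (Suc k) * x = x - s * x - spow s k * x + spow s k * (s * x)"
      by (simp add: algebra_simps mult.assoc)
    also have "\<dots> = spow s (Suc k) - spow s k" unfolding sx by (simp add: algebra_simps)
    finally show ?thesis .
  qed
  have L5: "x - x * spow s (Suc k) = spow s (Suc k) - spow s k" for k
  proof -
    have "x - x * spow s (Suc k) = x - x * s - x * spow s k + (x * spow s k) * s"
      by (simp add: algebra_simps mult.assoc)
    also have "\<dots> = x - x * s - spow s k * x + spow s k * (x * s)"
      unfolding L3[symmetric] by (simp add: mult.assoc)
    also have "\<dots> = spow s (Suc k) - spow s k" unfolding xs by (simp add: algebra_simps)
    finally show ?thesis .
  qed
  have L6: "norm (spow s k) \<le> 2" for k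
  proof -
    have F0: "F0 \<noteq> bot" and lim: "((\<lambda>j. spow s k * e0 j) \<longlongrightarrow> spow s k) F0"
      and e01: "\<And>j. norm (e0 j) \<le> 1"
      using cai unfolding contractive_ai_def two_sided_bai_def right_bai_def by auto
    have "norm (spow s k * e0 j) \<le> 2" for j
    proof -
      have "norm (spow s k * e0 j) \<le> norm (e0 j) + norm (e0 j - spow s k * e0 j)"
        using norm_triangle_ineq4[of "e0 j" "e0 j - spow s k * e0 j"] by simp
      also have "\<dots> \<le> 1 + 1" using e01[of j] L2[where k=k and c="e0 j"] e01[of j] by linarith
      finally show ?thesis by simp
    qed
    thus ?thesis using tendsto_upperbound[OF tendsto_norm[OF lim], of 2] F0 by auto
  qed
  define N where "N = real (Suc n)"
  have N0: "N > 0" unfolding N_def by simp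
  define g where "g = (1/N) *\<^sub>R (\<Sum>k<Suc n. spow s (Suc k))"
  define S where "S = (\<Sum>k<Suc n. spow s (Suc k))"
  have ga: "c - g * c = (1/N) *\<^sub>R (\<Sum>k<Suc n. c - spow s (Suc k) * c)" for c
  proof -
    have "(\<Sum>k<Suc n. c - spow s (Suc k) * c) = N *\<^sub>R c - S * c"
      unfolding S_def N_def sum_subtractf sum_distrib_right[symmetric] sum_constant_scaleR by simp
    thus ?thesis unfolding g_def S_def[symmetric] using N0 by (simp add: scaleR_diff_right del: spow.simps)
  qed
  have ag: "c - c * g = (1/N) *\<^sub>R (\<Sum>k<Suc n. c - c * spow s (Suc k))" for c
  proof -
    have "(\<Sum>k<Suc n. c - c * spow s (Suc k)) = N *\<^sub>R c - c * S"
      unfolding S_def N_def sum_subtractf sum_distrib_left[symmetric] sum_constant_scaleR by simp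
    thus ?thesis unfolding g_def S_def[symmetric] using N0 by (simp add: scaleR_diff_right del: spow.simps)
  qed
  have gc: "norm (c - g * c) \<le> norm c" for c
    unfolding ga N_def by (rule avg_bound) (rule L2)
  have gFA: "g \<in> FA sc"
    unfolding FA_def mu_norm_def
  proof (simp, rule cSup_least)
    have "norm (sc 1 0 - g * 0) \<in> {norm (sc 1 c - g * c) |c. norm c \<le> 1}"
      by (intro CollectI exI[of _ 0]) simp
    thus "{norm (sc 1 c - g * c) |c. norm c \<le> 1} \<noteq> {}" by blast
  next
    fix v assume "v \<in> {norm (sc 1 c - g * c) |c. norm c \<le> 1}"
    then obtain c where "v = norm (sc 1 c - g * c)" "norm c \<le> 1" by blast
    moreover have "sc 1 c = c" using cs_ofreal[OF cs, of 1 c] by simp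
    ultimately show "v \<le> 1" using gc[of c] by simp
  qed
  have gn: "norm g \<le> 2"
    unfolding g_def N_def by (rule avg_bound) (rule L6)
  have einv: "e = (1/\<epsilon>) *\<^sub>R x" unfolding x_def using \<epsilon>0 by simp
  have ieps: "1/\<epsilon> = 2 * (M+1)" unfolding \<epsilon>_def by simp
  have sN: "norm (spow s m * c) \<le> 2 * norm c" for m c
    using norm_mult_ineq[of "spow s m" c] L6[of m] mult_right_mono[OF L6[of m], of "norm c"] by simp
  have left: "norm (a - g * a) \<le> norm (a - e * a) + 4 * (M+1) / real (Suc n) * norm a" for a
  proof -
    define d where "d = a - e * a"
    have "a - spow s (Suc k) * a = (d - spow s (Suc k) * d) + (1/\<epsilon>) *\<^sub>R ((spow s (Suc k) - spow s k) * a)" for k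
      by (rule left_id[OF x_def _ L4 d_def]) (use \<epsilon>0 in simp)
    hence "a - g * a = (1/N) *\<^sub>R (\<Sum>k<Suc n. d - spow s (Suc k) * d)
        + ((1/\<epsilon>) / N) *\<^sub>R (\<Sum>k<Suc n. (spow s (Suc k) - spow s k) * a)"
      unfolding ga by (rule avg_split)
    also have "(\<Sum>k<Suc n. (spow s (Suc k) - spow s k) * a) = (\<Sum>k<Suc n. spow s (Suc k) - spow s k) * a"
      by (simp only: sum_distrib_right)
    also have "(\<Sum>k<Suc n. spow s (Suc k) - spow s k) = spow s (Suc n)"
      by (subst sum_lessThan_telescope) simp
    finally have eq: "a - g * a = (1/N) *\<^sub>R (\<Sum>k<Suc n. d - spow s (Suc k) * d)
        + ((1/\<epsilon>) / N) *\<^sub>R (spow s (Suc n) * a)" .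
    have n1: "norm ((1/N) *\<^sub>R (\<Sum>k<Suc n. d - spow s (Suc k) * d)) \<le> norm d"
      unfolding N_def by (rule avg_bound) (rule L2)
    have n2: "norm (((1/\<epsilon>) / N) *\<^sub>R (spow s (Suc n) * a)) \<le> 4 * (M+1) / N * norm a"
    proof -
      have "norm (((1/\<epsilon>) / N) *\<^sub>R (spow s (Suc n) * a)) = (1/\<epsilon>)/N * norm (spow s (Suc n) * a)"
        using \<epsilon>0 N0 by simp
      also have "\<dots> \<le> (1/\<epsilon>)/N * (2 * norm a)"
        by (rule mult_left_mono[OF sN]) (use \<epsilon>0 N0 in simp)
      finally show ?thesis unfolding ieps by (simp add: field_simps)
    qed
    show ?thesis unfolding eq using norm_triangle_ineq[of "(1/N) *\<^sub>R (\<Sum>k<Suc n. d - spow s (Suc k) * d)"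
        "((1/\<epsilon>) / N) *\<^sub>R (spow s (Suc n) * a)"] n1 n2 unfolding d_def N_def by linarith
  qed
  have right: "norm (a - a * g) \<le> 3 * norm (a - a * e) + 4 * (M+1) / real (Suc n) * norm a" for a
  proof -
    define d where "d = a - a * e"
    have "a - a * spow s (Suc k) = (d - d * spow s (Suc k)) + (1/\<epsilon>) *\<^sub>R (a * (spow s (Suc k) - spow s k))" for k
      by (rule right_id[OF x_def _ L5 d_def]) (use \<epsilon>0 in simp)
    hence "a - a * g = (1/N) *\<^sub>R (\<Sum>k<Suc n. d - d * spow s (Suc k))
        + ((1/\<epsilon>) / N) *\<^sub>R (\<Sum>k<Suc n. a * (spow s (Suc k) - spow s k))"
      unfolding ag by (rule avg_split)
    also have "(\<Sum>k<Suc n. a * (spow s (Suc k) - spow s k)) = a * (\<Sum>k<Suc n. spow s (Suc k) - spow s k)"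
      by (simp only: sum_distrib_left)
    also have "(\<Sum>k<Suc n. spow s (Suc k) - spow s k) = spow s (Suc n)"
      by (subst sum_lessThan_telescope) simp
    finally have eq: "a - a * g = (1/N) *\<^sub>R (\<Sum>k<Suc n. d - d * spow s (Suc k))
        + ((1/\<epsilon>) / N) *\<^sub>R (a * spow s (Suc n))" .
    have n1: "norm ((1/N) *\<^sub>R (\<Sum>k<Suc n. d - d * spow s (Suc k))) \<le> 3 * norm d"
    proof -
      have b: "norm (d - d * spow s (Suc k)) \<le> 3 * norm d" for k
      proof -
        have "norm (d - d * spow s (Suc k)) \<le> norm d + norm d * norm (spow s (Suc k))"
          using norm_triangle_ineq4[of d "d * spow s (Suc k)"] norm_mult_ineq[of d "spow s (Suc k)"] by linarith
        also have "\<dots> \<le> norm d + norm d * 2"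
          using mult_left_mono[OF L6[of "Suc k"] norm_ge_zero[of d]] by linarith
        finally show ?thesis by simp
      qed
      show ?thesis unfolding N_def by (rule avg_bound) (rule b)
    qed
    have n2: "norm (((1/\<epsilon>) / N) *\<^sub>R (a * spow s (Suc n))) \<le> 4 * (M+1) / N * norm a"
    proof -
      have "norm (((1/\<epsilon>) / N) *\<^sub>R (a * spow s (Suc n))) = (1/\<epsilon>)/N * norm (a * spow s (Suc n))"
        using \<epsilon>0 N0 by simp
      also have "\<dots> \<le> (1/\<epsilon>)/N * (2 * norm a)"
      proof (rule mult_left_mono)
        show "norm (a * spow s (Suc n)) \<le> 2 * norm a"
          using norm_mult_ineq[of a "spow s (Suc n)"] mult_left_mono[OF L6[of "Suc n"], of "norm a"] by simp
      qed (use \<epsilon>0 N0 in simp)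
      finally show ?thesis unfolding ieps by (simp add: field_simps)
    qed
    show ?thesis unfolding eq using norm_triangle_ineq[of "(1/N) *\<^sub>R (\<Sum>k<Suc n. d - d * spow s (Suc k))"
        "((1/\<epsilon>) / N) *\<^sub>R (a * spow s (Suc n))"] n1 n2 unfolding d_def N_def by linarith
  qed
  show ?thesis using gFA gn left right by blast
qed



lemma zero_FA:
  assumes cs: "complex_scalars sc"
  shows "0 \<in> FA sc"
  unfolding FA_def mu_norm_def
proof (simp, rule cSup_least)
  have "norm (sc 1 0) \<in> {norm (sc 1 c) |c. norm c \<le> 1}"
    by (intro CollectI exI[of _ 0]) simp
  thus "{norm (sc 1 c) |c. norm c \<le> 1} \<noteq> {}" by blast
next
  fix v assume "v \<in> {norm (sc 1 c) |c. norm c \<le> 1}"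
  then obtain c where "v = norm (sc 1 c)" "norm c \<le> 1" by blast
  moreover have "sc 1 c = c" using cs_ofreal[OF cs, of 1 c] by simp
  ultimately show "v \<le> 1" by simp
qed

lemma filterlim_fst_prod: "filterlim fst A (A \<times>\<^sub>F B)"
  unfolding filterlim_def by (rule filtermap_fst_prod_filter)

lemma filterlim_snd_prod: "filterlim snd B (A \<times>\<^sub>F B)"
  unfolding filterlim_def by (rule filtermap_snd_prod_filter)

lemma limit_aux:
  fixes X :: "'i \<times> nat \<Rightarrow> 'a::real_normed_vector" and u :: "'i \<Rightarrow> real"
  assumes b: "\<And>i n. norm (a - X (i, n)) \<le> C * u i + K / real (Suc n)"
    and u: "(u \<longlongrightarrow> 0) F"
  shows "(X \<longlongrightarrow> a) (F \<times>\<^sub>F sequentially)"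
proof -
  have u2: "((\<lambda>p. C * u (fst p)) \<longlongrightarrow> 0) (F \<times>\<^sub>F sequentially)"
    by (rule tendsto_mult_right_zero, rule filterlim_compose[OF u filterlim_fst_prod])
  have "((\<lambda>n. K * inverse (real (Suc n))) \<longlongrightarrow> 0) sequentially"
    by (rule tendsto_mult_right_zero, rule LIMSEQ_inverse_real_of_nat)
  hence v: "((\<lambda>n. K / real (Suc n)) \<longlongrightarrow> 0) sequentially" by (simp add: divide_inverse)
  have v2: "((\<lambda>p. K / real (Suc (snd p))) \<longlongrightarrow> 0) (F \<times>\<^sub>F sequentially)"
    by (rule filterlim_compose[OF v filterlim_snd_prod])
  have "((\<lambda>p. a - X p) \<longlongrightarrow> 0) (F \<times>\<^sub>F sequentially)"
  proof (rule Lim_null_comparison)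
    show "\<forall>\<^sub>F p in F \<times>\<^sub>F sequentially. norm (a - X p) \<le> C * u (fst p) + K / real (Suc (snd p))"
    proof (intro always_eventually allI)
      fix p :: "'i \<times> nat"
      show "norm (a - X p) \<le> C * u (fst p) + K / real (Suc (snd p))"
        using b[of "fst p" "snd p"] by simp
    qed
    show "((\<lambda>p. C * u (fst p) + K / real (Suc (snd p))) \<longlongrightarrow> 0) (F \<times>\<^sub>F sequentially)"
      using tendsto_add_zero[OF u2 v2] .
  qed
  hence "((\<lambda>p. a - (a - X p)) \<longlongrightarrow> a - 0) (F \<times>\<^sub>F sequentially)"
    by (intro tendsto_diff tendsto_const)
  thus ?thesis by simp
qed

lemma net_lemma:
  fixes sc :: "complex \<Rightarrow> 'a::{real_normed_algebra,banach} \<Rightarrow> 'a"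
    and F0 :: "'j filter" and e0 :: "'j \<Rightarrow> 'a"
    and F :: "'i filter" and e :: "'i \<Rightarrow> 'a"
  assumes cs: "complex_scalars sc" and cai: "contractive_ai F0 e0"
    and Fb: "F \<noteq> bot" and eM: "\<forall>i. norm (e i) \<le> M" and er: "range e \<subseteq> rA sc"
  shows "\<exists>(G::'a filter) g. G \<noteq> bot \<and> (\<forall>z. norm (g z) \<le> 2) \<and> range g \<subseteq> FA sc \<and>
     (\<forall>a. ((\<lambda>i. e i * a) \<longlongrightarrow> a) F \<longrightarrow> ((\<lambda>z. g z * a) \<longlongrightarrow> a) G) \<and>
     (\<forall>a. ((\<lambda>i. a * e i) \<longlongrightarrow> a) F \<longrightarrow> ((\<lambda>z. a * g z) \<longlongrightarrow> a) G)"
proof -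
  define P where "P i n g \<longleftrightarrow> g \<in> FA sc \<and> norm g \<le> 2 \<and>
     (\<forall>a. norm (a - g * a) \<le> norm (a - e i * a) + 4 * (M+1) / real (Suc n) * norm a) \<and>
     (\<forall>a. norm (a - a * g) \<le> 3 * norm (a - a * e i) + 4 * (M+1) / real (Suc n) * norm a)" for i n g
  have ex: "\<exists>g. P i n g" for i n
    unfolding P_def by (rule construct[OF cs cai]) (use er eM in auto)
  define gg where "gg i n = (SOME g. P i n g)" for i n
  have gg: "P i n (gg i n)" for i n unfolding gg_def using ex by (rule someI_ex)
  define K where "K = range (\<lambda>p. gg (fst p) (snd p))"
  define g where "g z = (if z \<in> K then z else 0)" for z
  define G where "G = filtermap (\<lambda>p. gg (fst p) (snd p)) (F \<times>\<^sub>F sequentially)"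
  have Gb: "G \<noteq> bot" unfolding G_def using Fb by (simp add: filtermap_bot_iff prod_filter_eq_bot)
  have gK: "g (gg i n) = gg i n" for i n
  proof -
    have "gg i n = gg (fst (i,n)) (snd (i,n))" by simp
    hence "gg i n \<in> K" unfolding K_def by blast
    thus ?thesis unfolding g_def by simp
  qed
  have gP: "norm (g z) \<le> 2 \<and> g z \<in> FA sc" for z
  proof (cases "z \<in> K")
    case True
    then obtain p where p: "z = gg (fst p) (snd p)" unfolding K_def by blast
    have "P (fst p) (snd p) (gg (fst p) (snd p))" by (rule gg)
    hence "norm z \<le> 2" "z \<in> FA sc" unfolding P_def p by blast+
    thus ?thesis unfolding g_def using True by simp
  next
    case False thus ?thesis unfolding g_def using zero_FA[OF cs] by simp
  qed
  have gn: "norm (g z) \<le> 2" for z using gP by blast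
  have gr: "range g \<subseteq> FA sc" using gP by blast
  have L: "((\<lambda>z. g z * a) \<longlongrightarrow> a) G" if l: "((\<lambda>i. e i * a) \<longlongrightarrow> a) F" for a
  proof -
    have u: "((\<lambda>i. norm (a - e i * a)) \<longlongrightarrow> 0) F"
    proof -
      have "((\<lambda>i. a - e i * a) \<longlongrightarrow> a - a) F" by (intro tendsto_diff tendsto_const l)
      hence "((\<lambda>i. a - e i * a) \<longlongrightarrow> 0) F" by simp
      thus ?thesis by (rule tendsto_norm_zero)
    qed
    have "((\<lambda>p. gg (fst p) (snd p) * a) \<longlongrightarrow> a) (F \<times>\<^sub>F sequentially)"
    proof (rule limit_aux[OF _ u])
      fix i n
      show "norm (a - gg (fst (i, n)) (snd (i, n)) * a) \<le> 1 * norm (a - e i * a) + 4 * (M+1) * norm a / real (Suc n)"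
        using gg[of i n] unfolding P_def by simp
    qed
    thus ?thesis unfolding G_def filterlim_filtermap gK .
  qed
  have R: "((\<lambda>z. a * g z) \<longlongrightarrow> a) G" if l: "((\<lambda>i. a * e i) \<longlongrightarrow> a) F" for a
  proof -
    have u: "((\<lambda>i. norm (a - a * e i)) \<longlongrightarrow> 0) F"
    proof -
      have "((\<lambda>i. a - a * e i) \<longlongrightarrow> a - a) F" by (intro tendsto_diff tendsto_const l)
      hence "((\<lambda>i. a - a * e i) \<longlongrightarrow> 0) F" by simp
      thus ?thesis by (rule tendsto_norm_zero)
    qed
    have "((\<lambda>p. a * gg (fst p) (snd p)) \<longlongrightarrow> a) (F \<times>\<^sub>F sequentially)"
    proof (rule limit_aux[OF _ u])
      fix i n
      show "norm (a - a * gg (fst (i, n)) (snd (i, n))) \<le> 3 * norm (a - a * e i) + 4 * (M+1) * norm a / real (Suc n)"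
        using gg[of i n] unfolding P_def by simp
    qed
    thus ?thesis unfolding G_def filterlim_filtermap gK .
  qed
  show ?thesis using Gb gn gr L R by blast
qed

theorem corollary3p9:
  fixes sc :: "complex \<Rightarrow> 'a::{real_normed_algebra,banach} \<Rightarrow> 'a"
    and F0 :: "'j filter" and e0 :: "'j \<Rightarrow> 'a"
  assumes "complex_scalars sc"
    and "contractive_ai F0 e0"
  shows "((\<exists>(F::'i filter) e. left_bai F e \<and> range e \<subseteq> rA sc) \<longrightarrow>
            (\<exists>(G::'a filter) g. left_bai G g \<and> range g \<subseteq> FA sc)) \<and>
         ((\<exists>(F::'i filter) e. right_bai F e \<and> range e \<subseteq> rA sc) \<longrightarrow>
            (\<exists>(G::'a filter) g. right_bai G g \<and> range g \<subseteq> FA sc)) \<and>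
         ((\<exists>(F::'i filter) e. two_sided_bai F e \<and> range e \<subseteq> rA sc) \<longrightarrow>
            (\<exists>(G::'a filter) g. two_sided_bai G g \<and> range g \<subseteq> FA sc))"
proof (intro conjI impI)
  assume "\<exists>(F::'i filter) e. left_bai F e \<and> range e \<subseteq> rA sc"
  then obtain F :: "'i filter" and e M where "F \<noteq> bot" "\<forall>i. norm (e i) \<le> M" "range e \<subseteq> rA sc"
    "\<forall>a. ((\<lambda>i. e i * a) \<longlongrightarrow> a) F" unfolding left_bai_def by blast
  from net_lemma[OF assms this(1-3)] this(4) show "\<exists>(G::'a filter) g. left_bai G g \<and> range g \<subseteq> FA sc"
    unfolding left_bai_def by blast
next
  assume "\<exists>(F::'i filter) e. right_bai F e \<and> range e \<subseteq> rA sc"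
  then obtain F :: "'i filter" and e M where "F \<noteq> bot" "\<forall>i. norm (e i) \<le> M" "range e \<subseteq> rA sc"
    "\<forall>a. ((\<lambda>i. a * e i) \<longlongrightarrow> a) F" unfolding right_bai_def by blast
  from net_lemma[OF assms this(1-3)] this(4) show "\<exists>(G::'a filter) g. right_bai G g \<and> range g \<subseteq> FA sc"
    unfolding right_bai_def by blast
next
  assume "\<exists>(F::'i filter) e. two_sided_bai F e \<and> range e \<subseteq> rA sc"
  then obtain F :: "'i filter" and e M where "F \<noteq> bot" "\<forall>i. norm (e i) \<le> M" "range e \<subseteq> rA sc"
    "\<forall>a. ((\<lambda>i. e i * a) \<longlongrightarrow> a) F" "\<forall>a. ((\<lambda>i. a * e i) \<longlongrightarrow> a) F"
    unfolding two_sided_bai_def left_bai_def right_bai_def by blast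
  from net_lemma[OF assms this(1-3)] this(4,5) show "\<exists>(G::'a filter) g. two_sided_bai G g \<and> range g \<subseteq> FA sc"
    unfolding two_sided_bai_def left_bai_def right_bai_def by blast
qed

end
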